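(* Let $\boldsymbol\psi\in\mathbb R^n$ with all entries positive and let $\boldsymbol\Sigma$ be a real symmetric positive definite $n\times n$ matrix whose diagonal entries all equal a common constant $\bar\lambda>1$. Let $\lambda_1\ge\dots\ge\lambda_n>0$ be the eigenvalues of $\boldsymbol\Sigma$ with orthonormal eigenvectors $\mathbf u_1,\dots,\mathbf u_n$, and let $k\in\{0,\dots,n\}$ be such that $\lambda_i>\bar\lambda$ for $i\le k$ and $\lambda_i\le\bar\lambda$ for $i>k$. Define $\Omega(\mathbf q)=\boldsymbol\psi^\top\mathbf q-\tfrac12\mathbf q^\top\boldsymbol\Sigma\mathbf q$, $\mathbf q^\ddagger=\tfrac12\boldsymbol\Sigma^{-1}\boldsymbol\psi$, $\mathbf q^*=(\boldsymbol\Sigma+\bar\lambda\mathbf I)^{-1}\boldsymbol\psi$, and $$w_i=\frac{(\lambda_i+3\bar\lambda)(\lambda_i-\bar\lambda)}{\lambda_i(\lambda_i+\bar\lambda)^2}.$$ Then $\Omega(\mathbf q^* )>\Omega(\mathbf q^\ddagger)$ if and only if $$\sum_{i=1}^k|w_i|(\boldsymbol\psi^\top\mathbf u_i)^2>\sum_{i=k+1}^n|w_i|(\boldsymbol\psi^\top\mathbf u_i)^2 .$$ In particular, if $k\ge 1$ and $\boldsymbol\psi\in\operatorname{span}\{\mathbf u_1,\dots,\mathbf u_k\}$, then $\Omega(\mathbf q^* )>\Omega(\mathbf q^\ddagger)$.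
   Context: Interpretation (not needed for the statement): $\mathbf q^\ddagger$ maximizes aggregate profit $\sum_i(\psi_i-\sum_j\sigma_{ij}q_j)q_i$ (monopoly), and $\mathbf q^*$ is the Cournot equilibrium output profile when firm $i$'s profit is $(\psi_i-\sum_j\sigma_{ij}q_j)q_i$. *)

theory Defs
  imports "HOL-Analysis.Analysis"
begin

definition Omega :: "real^'n \<Rightarrow> real^'n^'n \<Rightarrow> real^'n \<Rightarrow> real" where
  "Omega psi S q = psi \<bullet> q - (1/2) * (q \<bullet> (S *v q))"

definition q_monopoly :: "real^'n \<Rightarrow> real^'n^'n \<Rightarrow> real^'n" where
  "q_monopoly psi S = (1/2) *\<^sub>R (matrix_inv S *v psi)"

definition q_cournot :: "real^'n \<Rightarrow> real^'n^'n \<Rightarrow> real \<Rightarrow> real^'n" where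
  "q_cournot psi S lbar = matrix_inv (S + lbar *\<^sub>R mat 1) *v psi"

definition wgt :: "real \<Rightarrow> real \<Rightarrow> real" where
  "wgt lbar l = ((l + 3 * lbar) * (l - lbar)) / (l * (l + lbar)^2)"

end

theory Submission
  imports Defs
begin

lemma alg_step:
  fixes x m t :: real
  assumes "x>0" "x+m>0"
  shows "t*(t/(x+m)) - 1/2*x*(t/(x+m))^2 - (t*(t/(2*x)) - 1/2*x*(t/(2*x))^2) = ((x+3*m)*(x-m))/(x*(x+m)^2) * t^2/8"
  using assms
  apply (simp add: divide_simps)
  apply (simp add: algebra_simps power2_eq_square power3_eq_cube)
  done

lemma ortho_inner:
  fixes u :: "nat \<Rightarrow> 'a::real_inner"
  assumes fin: "finite I" and on: "\<forall>i\<in>I. \<forall>j\<in>I. u i \<bullet> u j = (if i = j then 1 else 0)"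
  shows "(\<Sum>i\<in>I. a i *\<^sub>R u i) \<bullet> (\<Sum>j\<in>I. b j *\<^sub>R u j) = (\<Sum>i\<in>I. a i * b i)"
proof -
  have "(\<Sum>i\<in>I. a i *\<^sub>R u i) \<bullet> (\<Sum>j\<in>I. b j *\<^sub>R u j)
      = (\<Sum>j\<in>I. b j * (\<Sum>i\<in>I. a i * (if i = j then 1 else 0)))"
    by (simp add: inner_sum_left inner_sum_right on)
  also have "\<dots> = (\<Sum>j\<in>I. b j * a j)"
  proof (rule sum.cong)
    fix j assume "j \<in> I"
    have "(\<Sum>i\<in>I. a i * (if i = j then 1 else 0)) = (\<Sum>i\<in>I. if i = j then a i else 0)"
      by (rule sum.cong) auto
    also have "\<dots> = a j" using fin \<open>j \<in> I\<close> by (simp add: sum.delta)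
    finally show "b j * (\<Sum>i\<in>I. a i * (if i = j then 1 else 0)) = b j * a j" by simp
  qed simp
  also have "\<dots> = (\<Sum>i\<in>I. a i * b i)" by (simp add: mult.commute)
  finally show ?thesis .
qed

lemma ortho_expand:
  fixes u :: "nat \<Rightarrow> 'a::euclidean_space"
  assumes fin: "finite I" and on: "\<forall>i\<in>I. \<forall>j\<in>I. u i \<bullet> u j = (if i = j then 1 else 0)"
    and sp: "span (u ` I) = UNIV"
  shows "x = (\<Sum>i\<in>I. (x \<bullet> u i) *\<^sub>R u i)"
proof -
  have inj: "inj_on u I"
  proof (rule inj_onI)
    fix i j assume "i \<in> I" "j \<in> I" "u i = u j"
    then have "u i \<bullet> u j = 1" using on by auto
    then show "i = j" using on \<open>i \<in> I\<close> \<open>j \<in> I\<close> by (auto split: if_splits)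
  qed
  have po: "pairwise orthogonal (u ` I)"
    unfolding pairwise_def orthogonal_def using on by auto
  have nm: "\<And>v. v \<in> u ` I \<Longrightarrow> norm v = 1"
    using on by (auto simp: norm_eq_sqrt_inner)
  have "(\<Sum>v\<in>u ` I. (x \<bullet> v) *\<^sub>R v) = x"
    by (rule orthonormal_basis_expand[OF po nm]) (use sp fin in auto)
  then show ?thesis by (simp add: sum.reindex[OF inj])
qed

lemma eig_inv:
  fixes M :: "real^'n^'n" and u :: "nat \<Rightarrow> real^'n"
  assumes fin: "finite I" and on: "\<forall>i\<in>I. \<forall>j\<in>I. u i \<bullet> u j = (if i = j then 1 else 0)"
    and sp: "span (u ` I) = UNIV"
    and ev: "\<forall>i\<in>I. M *v u i = m i *\<^sub>R u i" and nz: "\<forall>i\<in>I. m i \<noteq> 0"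
  shows "matrix_inv M *v x = (\<Sum>i\<in>I. ((x \<bullet> u i) / m i) *\<^sub>R u i)"
proof -
  define f where "f x = (\<Sum>i\<in>I. ((x \<bullet> u i) / m i) *\<^sub>R u i)" for x
  have Mf: "M *v f y = y" for y
  proof -
    have "M *v f y = (\<Sum>i\<in>I. ((y \<bullet> u i) / m i) *\<^sub>R (M *v u i))"
      unfolding f_def by (simp add: linear_sum[OF matrix_vector_mul_linear] matrix_vector_mult_scaleR)
    also have "\<dots> = (\<Sum>i\<in>I. (y \<bullet> u i) *\<^sub>R u i)"
      by (rule sum.cong) (use ev nz in auto)
    also have "\<dots> = y" using ortho_expand[OF fin on sp] by metis
    finally show ?thesis .
  qed
  have "surj ((*v) M)" by (metis Mf surjI)
  then obtain B where "M ** B = mat 1" using matrix_right_invertible_surjective by blast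
  then have "\<exists>A'. M ** A' = mat 1 \<and> A' ** M = mat 1" using matrix_left_right_inverse by blast
  then have "M ** matrix_inv M = mat 1 \<and> matrix_inv M ** M = mat 1"
    unfolding matrix_inv_def by (rule someI_ex)
  then have "matrix_inv M *v (M *v f x) = f x"
    by (simp add: matrix_vector_mul_assoc)
  then show ?thesis using Mf f_def by simp
qed

lemma Omega_expand:
  fixes S :: "real^'n^'n" and u :: "nat \<Rightarrow> real^'n"
  assumes fin: "finite I" and on: "\<forall>i\<in>I. \<forall>j\<in>I. u i \<bullet> u j = (if i = j then 1 else 0)"
    and sp: "span (u ` I) = UNIV"
    and ev: "\<forall>i\<in>I. S *v u i = lam i *\<^sub>R u i"
  shows "Omega psi S (\<Sum>i\<in>I. a i *\<^sub>R u i)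
     = (\<Sum>i\<in>I. (psi \<bullet> u i) * a i - (1/2) * lam i * (a i)^2)"
proof -
  have p: "psi = (\<Sum>i\<in>I. (psi \<bullet> u i) *\<^sub>R u i)" by (rule ortho_expand[OF fin on sp])
  have Sq: "S *v (\<Sum>i\<in>I. a i *\<^sub>R u i) = (\<Sum>i\<in>I. (lam i * a i) *\<^sub>R u i)"
    by (simp add: linear_sum[OF matrix_vector_mul_linear] matrix_vector_mult_scaleR ev mult.commute)
  have 1: "psi \<bullet> (\<Sum>i\<in>I. a i *\<^sub>R u i) = (\<Sum>i\<in>I. (psi \<bullet> u i) * a i)"
    by (subst p, rule ortho_inner[OF fin on])
  have 2: "(\<Sum>i\<in>I. a i *\<^sub>R u i) \<bullet> (S *v (\<Sum>i\<in>I. a i *\<^sub>R u i)) = (\<Sum>i\<in>I. a i * (lam i * a i))"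
    unfolding Sq by (rule ortho_inner[OF fin on])
  show ?thesis unfolding Omega_def 1 2
    by (simp add: sum_subtractf sum_distrib_left power2_eq_square algebra_simps)
qed

theorem theorem5:
  fixes psi :: "real^'n" and S :: "real^'n^'n" and lbar :: real
    and lam :: "nat \<Rightarrow> real" and u :: "nat \<Rightarrow> real^'n" and k :: nat
  assumes psi_pos: "\<forall>j. psi $ j > 0"
    and sym: "transpose S = S"
    and posdef: "\<forall>x. x \<noteq> 0 \<longrightarrow> x \<bullet> (S *v x) > 0"
    and diag: "\<forall>j. S $ j $ j = lbar"
    and lbar_gt: "lbar > 1"
    and eig: "\<forall>i\<in>{1..CARD('n)}. S *v u i = lam i *\<^sub>R u i"
    and orthonormal: "\<forall>i\<in>{1..CARD('n)}. \<forall>j\<in>{1..CARD('n)}.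
                        u i \<bullet> u j = (if i = j then 1 else 0)"
    and sorted: "\<forall>i\<in>{1..CARD('n)}. \<forall>j\<in>{1..CARD('n)}. i \<le> j \<longrightarrow> lam j \<le> lam i"
    and lam_pos: "\<forall>i\<in>{1..CARD('n)}. lam i > 0"
    and k_le: "k \<le> CARD('n)"
    and above: "\<forall>i\<in>{1..k}. lam i > lbar"
    and below: "\<forall>i\<in>{k+1..CARD('n)}. lam i \<le> lbar"
  shows "(Omega psi S (q_cournot psi S lbar) > Omega psi S (q_monopoly psi S)
           \<longleftrightarrow> (\<Sum>i=1..k. \<bar>wgt lbar (lam i)\<bar> * (psi \<bullet> u i)^2)
               > (\<Sum>i=k+1..CARD('n). \<bar>wgt lbar (lam i)\<bar> * (psi \<bullet> u i)^2))
       \<and> ((k \<ge> 1 \<and> psi \<in> span (u ` {1..k}))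
           \<longrightarrow> Omega psi S (q_cournot psi S lbar) > Omega psi S (q_monopoly psi S))"
proof -
  define n where "n = CARD('n)"
  define I where "I = {1..n}"
  define c where "c i = psi \<bullet> u i" for i
  have fin: "finite I" by (simp add: I_def)
  have on: "\<forall>i\<in>I. \<forall>j\<in>I. u i \<bullet> u j = (if i = j then 1 else 0)"
    using orthonormal by (simp add: I_def n_def)
  have ev: "\<forall>i\<in>I. S *v u i = lam i *\<^sub>R u i" using eig by (simp add: I_def n_def)
  have lp: "\<forall>i\<in>I. lam i > 0" using lam_pos by (simp add: I_def n_def)
  have inj: "inj_on u I"
  proof (rule inj_onI)
    fix i j assume "i \<in> I" "j \<in> I" "u i = u j"
    then have "u i \<bullet> u j = 1" using on by auto
    then show "i = j" using on \<open>i \<in> I\<close> \<open>j \<in> I\<close> by (auto split: if_splits)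
  qed
  have po: "pairwise orthogonal (u ` I)"
    unfolding pairwise_def orthogonal_def using on by auto
  have z: "0 \<notin> u ` I" using on by fastforce
  have ind: "independent (u ` I)" by (rule pairwise_orthogonal_independent[OF po z])
  have cd: "card (u ` I) = dim (UNIV :: (real^'n) set)"
    using card_image[OF inj] by (simp add: I_def n_def dim_UNIV)
  have "UNIV \<subseteq> span (u ` I)"
    using eucl.card_eq_dim[of "u ` I" UNIV] ind cd fin by auto
  then have sp: "span (u ` I) = UNIV" by auto
  have lb0: "lbar > 0" using lbar_gt by simp
  have evA: "\<forall>i\<in>I. (S + lbar *\<^sub>R mat 1) *v u i = (lam i + lbar) *\<^sub>R u i"
    using ev by (simp add: matrix_vector_mult_add_rdistrib scaleR_matrix_vector_assoc[symmetric] algebra_simps)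
  have qc: "q_cournot psi S lbar = (\<Sum>i\<in>I. (c i / (lam i + lbar)) *\<^sub>R u i)"
    unfolding q_cournot_def c_def
    by (rule eig_inv[OF fin on sp evA]) (use lp lb0 in \<open>auto simp: add_pos_pos\<close>)
  have qm: "q_monopoly psi S = (\<Sum>i\<in>I. (c i / (2 * lam i)) *\<^sub>R u i)"
  proof -
    have "matrix_inv S *v psi = (\<Sum>i\<in>I. (c i / lam i) *\<^sub>R u i)"
      unfolding c_def by (rule eig_inv[OF fin on sp ev]) (use lp in auto)
    then show ?thesis unfolding q_monopoly_def by (simp add: scaleR_sum_right)
  qed
  have diff: "Omega psi S (q_cournot psi S lbar) - Omega psi S (q_monopoly psi S)
      = (\<Sum>i\<in>I. wgt lbar (lam i) * (c i)^2 / 8)"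
  proof -
    have "Omega psi S (q_cournot psi S lbar) - Omega psi S (q_monopoly psi S)
       = (\<Sum>i\<in>I. (c i * (c i / (lam i + lbar)) - 1/2 * lam i * (c i / (lam i + lbar))^2)
                - (c i * (c i / (2 * lam i)) - 1/2 * lam i * (c i / (2 * lam i))^2))"
      unfolding qc qm Omega_expand[OF fin on sp ev] c_def by (simp add: sum_subtractf)
    also have "\<dots> = (\<Sum>i\<in>I. wgt lbar (lam i) * (c i)^2 / 8)"
    proof (rule sum.cong)
      fix i assume "i \<in> I"
      then have l: "lam i > 0" using lp by auto
      then have l2: "lam i + lbar > 0" using lb0 by simp
      show "(c i * (c i / (lam i + lbar)) - 1/2 * lam i * (c i / (lam i + lbar))^2)
                - (c i * (c i / (2 * lam i)) - 1/2 * lam i * (c i / (2 * lam i))^2)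
            = wgt lbar (lam i) * (c i)^2 / 8"
        using alg_step[OF l l2] unfolding wgt_def by simp
    qed simp
    finally show ?thesis .
  qed
  define A where "A = (\<Sum>i=1..k. \<bar>wgt lbar (lam i)\<bar> * (psi \<bullet> u i)^2)"
  define B where "B = (\<Sum>i=k+1..CARD('n). \<bar>wgt lbar (lam i)\<bar> * (psi \<bullet> u i)^2)"
  have Iu: "I = {1..k} \<union> {k+1..n}" using k_le by (auto simp: I_def n_def)
  have wpos: "wgt lbar (lam i) > 0" if "i \<in> {1..k}" for i
  proof -
    have "lam i > lbar" using above that by auto
    then show ?thesis unfolding wgt_def using lb0 by (intro divide_pos_pos mult_pos_pos) auto
  qed
  have wneg: "wgt lbar (lam i) \<le> 0" if "i \<in> {k+1..n}" for i
  proof -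
    have "lam i \<le> lbar" using below that by (auto simp: n_def)
    moreover have "lam i > 0" using lp that k_le by (auto simp: I_def)
    ultimately show ?thesis unfolding wgt_def using lb0
      by (intro divide_nonpos_pos mult_nonneg_nonpos) auto
  qed
  have sumsplit: "(\<Sum>i\<in>I. wgt lbar (lam i) * (c i)^2 / 8) = (A - B) / 8"
  proof -
    have "(\<Sum>i\<in>I. wgt lbar (lam i) * (c i)^2 / 8)
        = (\<Sum>i\<in>{1..k}. wgt lbar (lam i) * (c i)^2 / 8) + (\<Sum>i\<in>{k+1..n}. wgt lbar (lam i) * (c i)^2 / 8)"
      unfolding Iu by (rule sum.union_disjoint) auto
    also have "(\<Sum>i\<in>{1..k}. wgt lbar (lam i) * (c i)^2 / 8) = A / 8"
      unfolding A_def c_def sum_divide_distrib by (rule sum.cong) (use wpos in \<open>auto intro: abs_of_pos[symmetric]\<close>)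
    also have "(\<Sum>i\<in>{k+1..n}. wgt lbar (lam i) * (c i)^2 / 8) = - B / 8"
      unfolding B_def c_def n_def sum_divide_distrib sum_negf[symmetric]
      by (rule sum.cong) (use wneg in \<open>auto simp: n_def abs_of_nonpos\<close>)
    finally show ?thesis by simp
  qed
  have part1: "Omega psi S (q_cournot psi S lbar) > Omega psi S (q_monopoly psi S) \<longleftrightarrow> A > B"
    proof -
    have e: "Omega psi S (q_cournot psi S lbar) - Omega psi S (q_monopoly psi S) = (A - B) / 8"
      using diff sumsplit by simp
    show ?thesis
    proof
      assume "Omega psi S (q_cournot psi S lbar) > Omega psi S (q_monopoly psi S)"
      then show "A > B" using e by (simp add: field_simps)
    next
      assume "A > B"
      then show "Omega psi S (q_cournot psi S lbar) > Omega psi S (q_monopoly psi S)" using e by (simp add: field_simps)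
    qed
  qed
  have part2: "A > B" if k1: "k \<ge> 1" and psp: "psi \<in> span (u ` {1..k})"
  proof -
    have c0: "c i = 0" if "i \<in> {k+1..n}" for i
    proof -
      have "orthogonal (u i) psi"
      proof (rule orthogonal_to_span[OF psp])
        fix y assume "y \<in> u ` {1..k}"
        then obtain j where j: "j \<in> {1..k}" "y = u j" by auto
        have "i \<in> I" "j \<in> I" using that j k_le by (auto simp: I_def)
        moreover have "i \<noteq> j" using that j by auto
        ultimately show "orthogonal (u i) y" using on j unfolding orthogonal_def by auto
      qed
      then show ?thesis unfolding c_def orthogonal_def by (simp add: inner_commute)
    qed
    have B0: "B = 0" unfolding B_def using c0 by (auto simp: c_def n_def)
    have "\<exists>i\<in>{1..k}. c i \<noteq> 0"
    proof (rule ccontr)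
      assume "\<not> ?thesis"
      then have "\<forall>i\<in>I. c i = 0" using c0 Iu by auto
      then have "psi = 0" using ortho_expand[OF fin on sp, of psi] by (simp add: c_def)
      then show False using psi_pos by (metis less_irrefl zero_index)
    qed
    then obtain i where i: "i \<in> {1..k}" "c i \<noteq> 0" by auto
    have "0 < \<bar>wgt lbar (lam i)\<bar> * (psi \<bullet> u i)^2" using wpos[OF i(1)] i(2) by (simp add: c_def)
    also have "\<dots> \<le> A" unfolding A_def by (rule member_le_sum) (use i in auto)
    finally show ?thesis using B0 by simp
  qed
  show ?thesis unfolding A_def[symmetric] B_def[symmetric] using part1 part2 by blast
qed

end
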